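(* Let $S=(\mathcal R,\Gamma\Rightarrow x:A)$ be quasi-tree-like, let $\mathcal B\in\mathsf{BIGL}$ and let $\mathcal I$ be an interpretation of $S$ into $\mathcal B$ with $\mathcal B,\mathcal I\not\models S$. Then for any instance of a rule of $\mathsf{labIK4}$ other than thinning whose conclusion is $S$, there is a premiss $S'$ of that instance and an interpretation $\mathcal I'$ of $S'$ into $\mathcal B$ such that $\mathcal B,\mathcal I'\not\models S'$ and $\mathcal I'(z)\ge\mathcal I(z)$ for all $z\in\mathrm{Var}(S)$.
   Context: Modal formulas: $A ::= p \mid \bot \mid A\wedge A \mid A \vee A \mid A \to A \mid \Box A \mid \Diamond A$. Labelled sequents $\mathcal R,\Gamma\Rightarrow\Delta$: $\mathcal R$ a set of relational atoms $xRy$, $\Gamma,\Delta$ multisets of labelled formulas $x:A$; $\mathrm{Var}$ = labels occurring. $\mathsf{labK4}$ rules (premisses / conclusion): id $\mathcal R,x:p\Rightarrow x:p$; $\bot$L $\mathcal R,x:\bot,\Gamma\Rightarrow\Delta$; cut: $\mathcal R,\Gamma\Rightarrow\Delta,x:A$ and $\mathcal R,\Gamma',x:A\Rightarrow\Delta'$ / $\mathcal R,\Gamma,\Gamma'\Rightarrow\Delta,\Delta'$; left/right weakening and contraction; thinning $\mathcal R,\Gamma\Rightarrow\Delta$ / $\mathcal R,\mathcal R',\Gamma\Rightarrow\Delta$; $\to$L: $\mathcal R,\Gamma\Rightarrow\Delta,x:A$ and $\mathcal R,\Gamma',x:B\Rightarrow\Delta'$ / $\mathcal R,\Gamma,\Gamma',x:A\to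 B\Rightarrow\Delta,\Delta'$; $\to$R: $\mathcal R,\Gamma,x:A\Rightarrow\Delta,x:B$ / $\mathcal R,\Gamma\Rightarrow\Delta,x:A\to B$; $\wedge$L: $\mathcal R,\Gamma,x:A_i\Rightarrow\Delta$ / $\mathcal R,\Gamma,x:A_0\wedge A_1\Rightarrow\Delta$; $\wedge$R: $\mathcal R,\Gamma\Rightarrow\Delta,x:A$ and $\mathcal R,\Gamma\Rightarrow\Delta,x:B$ / $\mathcal R,\Gamma\Rightarrow\Delta,x:A\wedge B$; $\vee$L: $\mathcal R,\Gamma,x:A\Rightarrow\Delta$ and $\mathcal R,\Gamma,x:B\Rightarrow\Delta$ / $\mathcal R,\Gamma,x:A\vee B\Rightarrow\Delta$; $\vee$R: $\mathcal R,\Gamma\Rightarrow\Delta,x:A_i$ / $\mathcal R,\Gamma\Rightarrow\Delta,x:A_0\vee A_1$; $\Diamond$L ($y$ fresh): $\mathcal R,xRy,\Gamma,y:A\Rightarrow\Delta$ / $\mathcal R,\Gamma,x:\Diamond A\Rightarrow\Delta$; $\Diamond$R: $\mathcal R,xRy,\Gamma\Rightarrow\Delta,y:A$ / $\mathcal R,xRy,\Gamma\Rightarrow\Delta,x:\Diamond A$; $\Box$R ($y$ fresh): $\mathcal R,xRy,\Gamma\Rightarrow\Delta,y:A$ / $\mathcal R,\Gamma\Rightarrow\Delta,x:\Box A$; $\Box$L: $\mathcal R,xRy,\Gamma,y:A\Rightarrow\Delta$ / $\mathcal R,xRy,\Gamma,x:\Box A\Rightarrow\Delta$; tr: $\mathcal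 R,xRy,yRz,xRz,\Gamma\Rightarrow\Delta$ / $\mathcal R,xRy,yRz,\Gamma\Rightarrow\Delta$. $\mathsf{labIK4}$: restriction to sequents with exactly one labelled formula on the right. Quasi-tree-like: $\mathcal R$ is a tree if some root $x_0\in\mathrm{Var}(\mathcal R)$ reaches each other label by a unique $R$-chain in $\mathcal R$; a quasi-tree if $\mathcal R_0\subseteq\mathcal R\subseteq\mathcal R_0^+$ for a tree $\mathcal R_0$; $\mathcal R,\Gamma\Rightarrow x:A$ is quasi-tree-like if either $\mathcal R=\emptyset$ and $\mathrm{Var}(\Gamma)\subseteq\{x\}$, or $\mathcal R$ is a quasi-tree containing all labels of $\Gamma$ and $x$. Birelational models $\mathcal B=(W,\le,R^{\mathcal B},V)$ with conditions (F1) $w\le w',wR^{\mathcal B}v\Rightarrow\exists v'(v\le v', w'R^{\mathcal B}v')$, (F2) $wR^{\mathcal B}v,v\le v'\Rightarrow\exists w'(w\le w',w'R^{\mathcal B}v')$, monotone $V$; satisfaction is intuitionistic for $\to$, $w\models\Box A$ iff for all $w'\ge w$ and $w'R^{\mathcal B}v$, $v\models A$; $w\models\Diamond A$ iff some $v$ with $wR^{\mathcal B}v$ satisfies $A$. $\mathsf{BIGL}$: $R^{\mathcal B}$ transitive and no infinite chain $x_1\le y_1R^{\mathcal B}x_2\le y_2R^{\mathcal B}\cdots$. An interpretation of a sequent $S$ into $\mathcal B$ is $\mathcal I:\mathrm{Var}(S)\to W$ with $\mathcal I(u)R^{\mathcal B}\mathcal I(v)$ whenever $uRv\in\mathcal R$;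 $\mathcal B,\mathcal I\models(\mathcal R,\Gamma\Rightarrow x:A)$ iff ($\mathcal B,\mathcal I(y)\models B$ for all $y:B\in\Gamma$) implies $\mathcal B,\mathcal I(x)\models A$. *)

theory Defs
  imports Main "HOL-Library.Multiset"
begin

datatype 'a form =
    Atom 'a
  | Bot
  | And "'a form" "'a form"
  | Or "'a form" "'a form"
  | Imp "'a form" "'a form"
  | Box "'a form"
  | Dia "'a form"

text \<open>Labels are natural numbers.  A sequent  R, Gamma => x:A  consists of a set of relational
atoms (pairs (u,v) standing for uRv), a multiset of labelled formulas and one labelled formula.\<close>

datatype 'a seq = Seq "(nat \<times> nat) set" "(nat \<times> 'a form) multiset" nat "'a form"

fun rels :: "'a seq \<Rightarrow> (nat \<times> nat) set" where
  "rels (Seq R G x A) = R"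

definition VarR :: "(nat \<times> nat) set \<Rightarrow> nat set" where
  "VarR R = fst ` R \<union> snd ` R"

definition VarG :: "(nat \<times> 'a form) multiset \<Rightarrow> nat set" where
  "VarG G = fst ` set_mset G"

fun Var :: "'a seq \<Rightarrow> nat set" where
  "Var (Seq R G x A) = VarR R \<union> VarG G \<union> {x}"

definition is_chain :: "(nat \<times> nat) set \<Rightarrow> nat \<Rightarrow> nat \<Rightarrow> nat list \<Rightarrow> bool" where
  "is_chain R u v xs \<longleftrightarrow> xs \<noteq> [] \<and> hd xs = u \<and> last xs = v \<and>
     (\<forall>i. Suc i < length xs \<longrightarrow> (xs ! i, xs ! Suc i) \<in> R)"

definition is_tree :: "(nat \<times> nat) set \<Rightarrow> bool" where
  "is_tree R0 \<longleftrightarrow> (\<exists>x0 \<in> VarR R0. \<forall>y \<in> VarR R0. y \<noteq> x0 \<longrightarrow> (\<exists>!xs. is_chain R0 x0 y xs))"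

definition quasi_tree :: "(nat \<times> nat) set \<Rightarrow> bool" where
  "quasi_tree R \<longleftrightarrow> (\<exists>R0. is_tree R0 \<and> R0 \<subseteq> R \<and> R \<subseteq> R0\<^sup>+)"

fun quasi_tree_like :: "'a seq \<Rightarrow> bool" where
  "quasi_tree_like (Seq R G x A) \<longleftrightarrow>
     (R = {} \<and> VarG G \<subseteq> {x}) \<or> (quasi_tree R \<and> VarG G \<union> {x} \<subseteq> VarR R)"

text \<open>Right weakening and right contraction have no instances in which all
sequents have exactly one formula on the right, so they do not appear.\<close>

inductive ik4_rule :: "'a seq list \<Rightarrow> 'a seq \<Rightarrow> bool" where
  idr: "ik4_rule [] (Seq R {#(x, Atom p)#} x (Atom p))"
| botL: "ik4_rule [] (Seq R (add_mset (x, Bot) G) y B)"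
| cut: "ik4_rule [Seq R G x A, Seq R (add_mset (x, A) G') y B] (Seq R (G + G') y B)"
| weakL: "ik4_rule [Seq R G y B] (Seq R (add_mset (x, A) G) y B)"
| contrL: "ik4_rule [Seq R (add_mset (x, A) (add_mset (x, A) G)) y B] (Seq R (add_mset (x, A) G) y B)"
| impL: "ik4_rule [Seq R G x A, Seq R (add_mset (x, B) G') y C]
           (Seq R (add_mset (x, Imp A B) (G + G')) y C)"
| impR: "ik4_rule [Seq R (add_mset (x, A) G) x B] (Seq R G x (Imp A B))"
| andL1: "ik4_rule [Seq R (add_mset (x, A) G) y C] (Seq R (add_mset (x, And A B) G) y C)"
| andL2: "ik4_rule [Seq R (add_mset (x, B) G) y C] (Seq R (add_mset (x, And A B) G) y C)"
| andR: "ik4_rule [Seq R G x A, Seq R G x B] (Seq R G x (And A B))"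
| orL: "ik4_rule [Seq R (add_mset (x, A) G) y C, Seq R (add_mset (x, B) G) y C]
          (Seq R (add_mset (x, Or A B) G) y C)"
| orR1: "ik4_rule [Seq R G x A] (Seq R G x (Or A B))"
| orR2: "ik4_rule [Seq R G x B] (Seq R G x (Or A B))"
| diaL: "y \<notin> Var (Seq R (add_mset (x, Dia A) G) z C) \<Longrightarrow>
         ik4_rule [Seq (insert (x, y) R) (add_mset (y, A) G) z C] (Seq R (add_mset (x, Dia A) G) z C)"
| diaR: "(x, y) \<in> R \<Longrightarrow> ik4_rule [Seq R G y A] (Seq R G x (Dia A))"
| boxR: "y \<notin> Var (Seq R G x (Box A)) \<Longrightarrow>
         ik4_rule [Seq (insert (x, y) R) G y A] (Seq R G x (Box A))"
| boxL: "(x, y) \<in> R \<Longrightarrow> ik4_rule [Seq R (add_mset (y, A) G) z C] (Seq R (add_mset (x, Box A) G) z C)"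
| tr: "(x, y) \<in> R \<Longrightarrow> (y, z) \<in> R \<Longrightarrow> ik4_rule [Seq (insert (x, z) R) G w C] (Seq R G w C)"

record ('w, 'a) bmodel =
  worlds :: "'w set"
  leq :: "'w \<Rightarrow> 'w \<Rightarrow> bool"
  acc :: "'w \<Rightarrow> 'w \<Rightarrow> bool"
  val :: "'w \<Rightarrow> 'a \<Rightarrow> bool"

definition birel_model :: "('w, 'a) bmodel \<Rightarrow> bool" where
  "birel_model B \<longleftrightarrow>
     (\<forall>w\<in>worlds B. leq B w w) \<and>
     (\<forall>u\<in>worlds B. \<forall>v\<in>worlds B. \<forall>w\<in>worlds B. leq B u v \<longrightarrow> leq B v w \<longrightarrow> leq B u w) \<and>
     (\<forall>u v. acc B u v \<longrightarrow> u \<in> worlds B \<and> v \<in> worlds B) \<and>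
     (\<forall>u v. leq B u v \<longrightarrow> u \<in> worlds B \<and> v \<in> worlds B) \<and>
     (\<forall>w w' v. leq B w w' \<longrightarrow> acc B w v \<longrightarrow> (\<exists>v'. leq B v v' \<and> acc B w' v')) \<and>
     (\<forall>w v v'. acc B w v \<longrightarrow> leq B v v' \<longrightarrow> (\<exists>w'. leq B w w' \<and> acc B w' v')) \<and>
     (\<forall>w w' p. leq B w w' \<longrightarrow> val B w p \<longrightarrow> val B w' p)"

definition BIGL :: "('w, 'a) bmodel \<Rightarrow> bool" where
  "BIGL B \<longleftrightarrow> birel_model B \<and>
     (\<forall>u v w. acc B u v \<longrightarrow> acc B v w \<longrightarrow> acc B u w) \<and>
     \<not> (\<exists>xs ys :: nat \<Rightarrow> 'w. \<forall>i. leq B (xs i) (ys i) \<and> acc B (ys i) (xs (Suc i)))"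

fun forces :: "('w, 'a) bmodel \<Rightarrow> 'w \<Rightarrow> 'a form \<Rightarrow> bool" where
  "forces B w (Atom p) = val B w p"
| "forces B w Bot = False"
| "forces B w (And A1 A2) = (forces B w A1 \<and> forces B w A2)"
| "forces B w (Or A1 A2) = (forces B w A1 \<or> forces B w A2)"
| "forces B w (Imp A1 A2) = (\<forall>w'. leq B w w' \<longrightarrow> forces B w' A1 \<longrightarrow> forces B w' A2)"
| "forces B w (Box A1) = (\<forall>w' v. leq B w w' \<longrightarrow> acc B w' v \<longrightarrow> forces B v A1)"
| "forces B w (Dia A1) = (\<exists>v. acc B w v \<and> forces B v A1)"

definition interp :: "('w, 'a) bmodel \<Rightarrow> (nat \<Rightarrow> 'w) \<Rightarrow> 'a seq \<Rightarrow> bool" where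
  "interp B I S \<longleftrightarrow> (\<forall>u\<in>Var S. I u \<in> worlds B) \<and> (\<forall>(u, v)\<in>rels S. acc B (I u) (I v))"

fun sat_seq :: "('w, 'a) bmodel \<Rightarrow> (nat \<Rightarrow> 'w) \<Rightarrow> 'a seq \<Rightarrow> bool" where
  "sat_seq B I (Seq R G x A) \<longleftrightarrow> ((\<forall>(y, C)\<in>set_mset G. forces B (I y) C) \<longrightarrow> forces B (I x) A)"

end

theory Submission
  imports Defs
begin

lemma bmD: assumes "birel_model B" shows
 "\<forall>w\<in>worlds B. leq B w w"
 "\<forall>u\<in>worlds B. \<forall>v\<in>worlds B. \<forall>w\<in>worlds B. leq B u v \<longrightarrow> leq B v w \<longrightarrow> leq B u w"
 "\<forall>u v. acc B u v \<longrightarrow> u \<in> worlds B \<and> v \<in> worlds B"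
 "\<forall>u v. leq B u v \<longrightarrow> u \<in> worlds B \<and> v \<in> worlds B"
 "\<forall>w w' v. leq B w w' \<longrightarrow> acc B w v \<longrightarrow> (\<exists>v'. leq B v v' \<and> acc B w' v')"
 "\<forall>w v v'. acc B w v \<longrightarrow> leq B v v' \<longrightarrow> (\<exists>w'. leq B w w' \<and> acc B w' v')"
 "\<forall>w w' p. leq B w w' \<longrightarrow> val B w p \<longrightarrow> val B w' p"
  using assms unfolding birel_model_def by blast+

lemma bm_refl: "birel_model B \<Longrightarrow> w \<in> worlds B \<Longrightarrow> leq B w w"
  using bmD(1) by blast
lemma bm_leqw: "birel_model B \<Longrightarrow> leq B u v \<Longrightarrow> u \<in> worlds B \<and> v \<in> worlds B"
  using bmD(4) by blast
lemma bm_trans: assumes "birel_model B" "leq B u v" "leq B v w" shows "leq B u w"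
  using bmD(2)[OF assms(1)] bm_leqw[OF assms(1)] assms(2,3) by meson
lemma bm_accw: "birel_model B \<Longrightarrow> acc B u v \<Longrightarrow> u \<in> worlds B \<and> v \<in> worlds B"
  using bmD(3) by blast
lemma bm_F1: "birel_model B \<Longrightarrow> leq B w w' \<Longrightarrow> acc B w v \<Longrightarrow> \<exists>v'. leq B v v' \<and> acc B w' v'"
  using bmD(5) by blast
lemma bm_F2: "birel_model B \<Longrightarrow> acc B w v \<Longrightarrow> leq B v v' \<Longrightarrow> \<exists>w'. leq B w w' \<and> acc B w' v'"
  using bmD(6) by blast
lemma bm_val: "birel_model B \<Longrightarrow> leq B w w' \<Longrightarrow> val B w p \<Longrightarrow> val B w' p"
  using bmD(7) by blast
lemma forces_mono:
  assumes bm: "birel_model B"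
  shows "forces B w A \<Longrightarrow> leq B w w' \<Longrightarrow> forces B w' A"
proof (induction A arbitrary: w w')
  case (Atom x)
  then show ?case using bm_val[OF bm] by simp
next
  case Bot
  then show ?case by simp
next
  case (And A1 A2)
  then show ?case by (simp; blast)
next
  case (Or A1 A2)
  then show ?case by (simp; blast)
next
  case (Imp A1 A2)
  have "\<And>w''. leq B w' w'' \<Longrightarrow> leq B w w''" using bm_trans[OF bm Imp.prems(2)] .
  then show ?case using Imp.prems(1) by simp
next
  case (Box A)
  have "\<And>w''. leq B w' w'' \<Longrightarrow> leq B w w''" using bm_trans[OF bm Box.prems(2)] .
  then show ?case using Box.prems(1) by auto
next
  case (Dia A)
  then obtain v where v: "acc B w v" "forces B v A" by auto
  obtain v' where v': "leq B v v'" "acc B w' v'" using bm_F1[OF bm Dia.prems(2) v(1)] by blast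
  show ?case using Dia.IH[OF v(2) v'(1)] v'(2) by auto
qed

lemma BIGL_D: assumes "BIGL B" shows "birel_model B"
  "\<forall>u v w. acc B u v \<longrightarrow> acc B v w \<longrightarrow> acc B u w"
  "\<not> (\<exists>xs ys :: nat \<Rightarrow> 'w. \<forall>i. leq B (xs i) (ys i) \<and> acc B (ys i) (xs (Suc i)))"
  using assms unfolding BIGL_def by simp_all

lemma BIGL_irrefl: "BIGL B \<Longrightarrow> \<not> acc B w w"
proof
  assume b: "BIGL B" and a: "acc B w w"
  have bm: "birel_model B" using BIGL_D(1)[OF b] .
  have "leq B w w" using bm_refl[OF bm] bm_accw[OF bm a] by blast
  then have "\<forall>i. leq B ((\<lambda>i. w) i) ((\<lambda>i. w) i) \<and> acc B ((\<lambda>i. w) i) ((\<lambda>i. w) (Suc i))"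
    using a by simp
  then have "\<exists>xs ys :: nat \<Rightarrow> _. \<forall>i. leq B (xs i) (ys i) \<and> acc B (ys i) (xs (Suc i))"
    by (intro exI)
  with BIGL_D(3)[OF b] show False by (rule notE)
qed

lemma BIGL_trans: "BIGL B \<Longrightarrow> acc B u v \<Longrightarrow> acc B v w \<Longrightarrow> acc B u w"
  using BIGL_D(2) by blast

lemma trancl_acc:
  assumes "BIGL B" "\<forall>(u,v)\<in>R. acc B (I u) (I v)" "(a,b) \<in> R\<^sup>+"
  shows "acc B (I a) (I b)"
  using assms(3)
proof (induction rule: trancl_induct)
  case (base y)
  then show ?case using assms(2) by blast
next
  case (step y z)
  then show ?case using assms(2) BIGL_trans[OF assms(1)] by blast
qed

lemma chain_rtrancl:
  assumes "is_chain R u v xs" shows "(u,v) \<in> R\<^sup>*"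
proof -
  have ne: "xs \<noteq> []" and h: "hd xs = u" and l: "last xs = v"
    and st: "\<And>i. Suc i < length xs \<Longrightarrow> (xs ! i, xs ! Suc i) \<in> R"
    using assms unfolding is_chain_def by auto
  have "i < length xs \<Longrightarrow> (hd xs, xs ! i) \<in> R\<^sup>*" for i
  proof (induction i)
    case 0
    then show ?case using ne by (simp add: hd_conv_nth)
  next
    case (Suc i)
    then show ?case using st[of i] by (meson Suc_lessD rtrancl.rtrancl_into_rtrancl)
  qed
  from this[of "length xs - 1"] ne h l show ?thesis by (simp add: last_conv_nth)
qed

lemma chain_snoc:
  assumes "is_chain R u v xs" "(v,w) \<in> R" shows "is_chain R u w (xs @ [w])"
  using assms unfolding is_chain_def
  apply (auto simp: nth_append)
  by (metis Suc_lessI diff_Suc_1 last_conv_nth)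

lemma chain_single: "is_chain R u u [u]"
  unfolding is_chain_def by simp

lemma VarR_I: "(u,v) \<in> R \<Longrightarrow> u \<in> VarR R \<and> v \<in> VarR R"
  unfolding VarR_def by force

lemma tree_indeg:
  assumes t: "is_tree R0" and ac: "acyclic R0" and pq: "(p,y) \<in> R0" "(q,y) \<in> R0"
  shows "p = q"
proof (rule ccontr)
  assume ne: "p \<noteq> q"
  from t obtain x0 where x0: "x0 \<in> VarR R0"
    and u: "\<And>y. y \<in> VarR R0 \<Longrightarrow> y \<noteq> x0 \<Longrightarrow> \<exists>!xs. is_chain R0 x0 y xs"
    unfolding is_tree_def by blast
  have ex: "\<exists>xs. is_chain R0 x0 z xs" if "z \<in> VarR R0" for z
    using u[OF that] chain_single by (cases "z = x0") auto
  obtain cp where cp: "is_chain R0 x0 p cp" using ex VarR_I pq(1) by blast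
  obtain cq where cq: "is_chain R0 x0 q cq" using ex VarR_I pq(2) by blast
  show False
  proof (cases "y = x0")
    case True
    have "(x0,p) \<in> R0\<^sup>*" using chain_rtrancl[OF cp] .
    with pq(1) True have "(x0,x0) \<in> R0\<^sup>+" by auto
    with ac show False unfolding acyclic_def by blast
  next
    case False
    have c1: "is_chain R0 x0 y (cp @ [y])" using chain_snoc[OF cp pq(1)] .
    have c2: "is_chain R0 x0 y (cq @ [y])" using chain_snoc[OF cq pq(2)] .
    have "cp @ [y] \<noteq> cq @ [y]"
      using cp cq ne unfolding is_chain_def by auto
    with c1 c2 u[of y] VarR_I[OF pq(1)] False show False by blast
  qed
qed



lemma leaf_exists:
  assumes "finite R0" "acyclic R0" "R0 \<noteq> {}"
  shows "\<exists>p l. (p,l) \<in> R0 \<and> (\<forall>y. (l,y) \<notin> R0)"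
proof -
  have wf: "wf (R0\<inverse>)" using finite_acyclic_wf_converse assms by blast
  obtain a b where ab: "(a,b) \<in> R0" using assms(3) by auto
  then have "b \<in> Range R0" by auto
  with wf obtain z where z: "z \<in> Range R0" "\<forall>y. (y,z) \<in> R0\<inverse> \<longrightarrow> y \<notin> Range R0"
    unfolding wf_eq_minimal by metis
  then show ?thesis by blast
qed

lemma lift_forest:
  assumes "finite R0" "birel_model B"
    and "\<forall>p q y. (p,y) \<in> R0 \<longrightarrow> (q,y) \<in> R0 \<longrightarrow> p = q"
    and "acyclic R0"
    and "\<forall>(u,v)\<in>R0. acc B (I u) (I v)"
    and "leq B (I x) w'"
  shows "\<exists>I'. (\<forall>z \<in> VarR R0 \<union> {x}. leq B (I z) (I' z)) \<and>
              (\<forall>z. z \<notin> VarR R0 \<union> {x} \<longrightarrow> I' z = I z) \<and> I' x = w' \<and>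
              (\<forall>(u,v)\<in>R0. acc B (I' u) (I' v))"
  using assms
proof (induction R0 arbitrary: x w' rule: finite_psubset_induct)
  case (psubset R0)
  show ?case
  proof (cases "R0 = {}")
    case True
    then show ?thesis using psubset.prems
      by (intro exI[of _ "I(x := w')"]) (auto simp: VarR_def)
  next
    case False
    obtain p l where pl: "(p,l) \<in> R0" and leaf: "\<forall>y. (l,y) \<notin> R0"
      using leaf_exists[OF psubset.hyps(1) psubset.prems(3) False] by blast
    define R1 where "R1 = R0 - {(p,l)}"
    have sub: "R1 \<subset> R0" using pl R1_def by auto
    have pnl: "p \<noteq> l" using pl leaf by blast
    have lnot: "l \<notin> VarR R1"
    proof
      assume "l \<in> VarR R1"
      then obtain u where "(u,l) \<in> R1 \<or> (l,u) \<in> R1" unfolding VarR_def by force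
      then show False using leaf psubset.prems(2) pl R1_def by auto
    qed
    have VR0: "VarR R0 = VarR R1 \<union> {p,l}"
      using pl unfolding R1_def VarR_def by force
    have h2: "\<forall>p q y. (p,y) \<in> R1 \<longrightarrow> (q,y) \<in> R1 \<longrightarrow> p = q" using psubset.prems(2) sub by blast
    have h3: "acyclic R1" using psubset.prems(3) sub acyclic_subset by blast
    have h4: "\<forall>(u,v)\<in>R1. acc B (I u) (I v)" using psubset.prems(4) sub by blast
    have apl: "acc B (I p) (I l)" using psubset.prems(4) pl by blast
    show ?thesis
    proof (cases "l = x")
      case True
      obtain p' where p': "leq B (I p) p'" "acc B p' w'"
        using bm_F2[OF psubset.prems(1) apl] psubset.prems(5) True by blast
      obtain I'' where I'': "\<forall>z \<in> VarR R1 \<union> {p}. leq B (I z) (I'' z)"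
        "\<forall>z. z \<notin> VarR R1 \<union> {p} \<longrightarrow> I'' z = I z" "I'' p = p'"
        "\<forall>(u,v)\<in>R1. acc B (I'' u) (I'' v)"
        using psubset.IH[OF sub psubset.prems(1) h2 h3 h4 p'(1)] by blast
      show ?thesis
      proof (intro exI[of _ "I''(x := w')"] conjI)
        show "\<forall>z\<in>VarR R0 \<union> {x}. leq B (I z) ((I''(x := w')) z)"
          using I''(1) VR0 True psubset.prems(5) by auto
        show "\<forall>z. z \<notin> VarR R0 \<union> {x} \<longrightarrow> (I''(x := w')) z = I z"
          using I''(2) VR0 by auto
        show "(I''(x := w')) x = w'" by simp
        show "\<forall>(u,v)\<in>R0. acc B ((I''(x := w')) u) ((I''(x := w')) v)"
        proof (intro ballI, clarify)
          fix u v assume uv: "(u,v) \<in> R0"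
          show "acc B ((I''(x := w')) u) ((I''(x := w')) v)"
          proof (cases "(u,v) = (p,l)")
            case True
            then show ?thesis using I''(3) p'(2) pnl \<open>l = x\<close> by auto
          next
            case False
            then have "(u,v) \<in> R1" using uv R1_def by auto
            moreover then have "u \<noteq> x" "v \<noteq> x" using lnot \<open>l = x\<close> VarR_I by metis+
            ultimately show ?thesis using I''(4) by auto
          qed
        qed
      qed
    next
      case False
      obtain I'' where I'': "\<forall>z \<in> VarR R1 \<union> {x}. leq B (I z) (I'' z)"
        "\<forall>z. z \<notin> VarR R1 \<union> {x} \<longrightarrow> I'' z = I z" "I'' x = w'"
        "\<forall>(u,v)\<in>R1. acc B (I'' u) (I'' v)"
        using psubset.IH[OF sub psubset.prems(1) h2 h3 h4 psubset.prems(5)] by blast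
      have lp: "leq B (I p) (I'' p)"
      proof (cases "p \<in> VarR R1 \<union> {x}")
        case True then show ?thesis using I''(1) by blast
      next
        case False then show ?thesis using I''(2) bm_refl bm_accw psubset.prems(1) apl by metis
      qed
      obtain v' where v': "leq B (I l) v'" "acc B (I'' p) v'"
        using bm_F1[OF psubset.prems(1) lp apl] by blast
      show ?thesis
      proof (intro exI[of _ "I''(l := v')"] conjI)
        show "\<forall>z\<in>VarR R0 \<union> {x}. leq B (I z) ((I''(l := v')) z)"
          using I''(1) VR0 lp v'(1) by auto
        show "\<forall>z. z \<notin> VarR R0 \<union> {x} \<longrightarrow> (I''(l := v')) z = I z"
          using I''(2) VR0 by auto
        show "(I''(l := v')) x = w'" using False I''(3) by simp
        show "\<forall>(u,v)\<in>R0. acc B ((I''(l := v')) u) ((I''(l := v')) v)"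
        proof (intro ballI, clarify)
          fix u v assume uv: "(u,v) \<in> R0"
          show "acc B ((I''(l := v')) u) ((I''(l := v')) v)"
          proof (cases "(u,v) = (p,l)")
            case True
            then show ?thesis using v'(2) pnl by auto
          next
            case False
            then have "(u,v) \<in> R1" using uv R1_def by auto
            moreover then have "u \<noteq> l" "v \<noteq> l" using lnot VarR_I by metis+
            ultimately show ?thesis using I''(4) by auto
          qed
        qed
      qed
    qed
  qed
qed



lemma VarR_mono_trancl: "R \<subseteq> R0\<^sup>+ \<Longrightarrow> VarR R \<subseteq> VarR R0"
proof -
  assume "R \<subseteq> R0\<^sup>+"
  then have "Domain R \<subseteq> Domain R0" "Range R \<subseteq> Range R0"
    using trancl_domain trancl_range by (metis Domain_mono, metis Range_mono)
  then show ?thesis unfolding VarR_def by (auto simp: Domain_fst Range_snd)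
qed

lemma lift_seq:
  assumes fin: "finite R" and qt: "quasi_tree_like (Seq R G x A)" and b: "BIGL B"
    and i: "interp B I (Seq R G x A)" and l: "leq B (I x) w'"
  shows "\<exists>I'. (\<forall>z\<in>Var (Seq R G x A). leq B (I z) (I' z)) \<and> I' x = w' \<and>
              (\<forall>(u,v)\<in>R. acc B (I' u) (I' v))"
proof (cases "R = {} \<and> VarG G \<subseteq> {x}")
  case True
  then show ?thesis using l by (intro exI[of _ "I(x := w')"]) (auto simp: VarR_def)
next
  case False
  have bm: "birel_model B" using BIGL_D(1)[OF b] .
  from False qt have q: "quasi_tree R" and sub: "VarG G \<union> {x} \<subseteq> VarR R" by auto
  from q obtain R0 where t: "is_tree R0" and s1: "R0 \<subseteq> R" and s2: "R \<subseteq> R0\<^sup>+"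
    unfolding quasi_tree_def by blast
  have eR: "\<forall>(u,v)\<in>R. acc B (I u) (I v)" using i unfolding interp_def by simp
  have eR0: "\<forall>(u,v)\<in>R0. acc B (I u) (I v)" using eR s1 by blast
  have ac: "acyclic R0"
    unfolding acyclic_def using trancl_acc[OF b eR0] BIGL_irrefl[OF b] by blast
  have ind: "\<forall>p q y. (p,y) \<in> R0 \<longrightarrow> (q,y) \<in> R0 \<longrightarrow> p = q"
    using tree_indeg[OF t ac] by blast
  have fin0: "finite R0" using fin s1 finite_subset by blast
  obtain I' where I': "\<forall>z \<in> VarR R0 \<union> {x}. leq B (I z) (I' z)" "I' x = w'"
    "\<forall>(u,v)\<in>R0. acc B (I' u) (I' v)"
    using lift_forest[OF fin0 bm ind ac eR0 l] by blast
  have V: "Var (Seq R G x A) \<subseteq> VarR R0" using sub VarR_mono_trancl[OF s2] by auto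
  show ?thesis
  proof (intro exI[of _ I'] conjI)
    show "\<forall>z\<in>Var (Seq R G x A). leq B (I z) (I' z)" using I'(1) V by blast
    show "I' x = w'" by fact
    show "\<forall>(u,v)\<in>R. acc B (I' u) (I' v)" using trancl_acc[OF b I'(3)] s2 by blast
  qed
qed



lemma VarG_add[simp]: "VarG (add_mset (x,A) G) = insert x (VarG G)"
  unfolding VarG_def by simp
lemma VarG_plus[simp]: "VarG (G + G') = VarG G \<union> VarG G'"
  unfolding VarG_def by auto
lemma VarG_I: "(u,C) \<in># G \<Longrightarrow> u \<in> VarG G"
  unfolding VarG_def by force
lemma VarR_insert[simp]: "VarR (insert (u,v) R) = VarR R \<union> {u,v}"
  unfolding VarR_def by auto

lemma interp_sub: "interp B I S \<Longrightarrow> Var S' \<subseteq> Var S \<Longrightarrow> rels S' \<subseteq> rels S \<Longrightarrow> interp B I S'"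
  unfolding interp_def by blast

lemma refl_var: assumes b: "BIGL B" and i: "interp B I S" shows "\<forall>z\<in>Var S. leq B (I z) (I z)"
proof
  fix z assume "z \<in> Var S"
  then have "I z \<in> worlds B" using i unfolding interp_def by simp
  then show "leq B (I z) (I z)" using bm_refl[OF BIGL_D(1)[OF b]] by simp
qed

lemma same_I: assumes "BIGL B" "interp B I S" "S' \<in> set Ps" "Var S' \<subseteq> Var S"
   "rels S' \<subseteq> rels S" "\<not> sat_seq B I S'"
  shows "\<exists>S' \<in> set Ps. \<exists>I'. interp B I' S' \<and> \<not> sat_seq B I' S' \<and> (\<forall>z \<in> Var S. leq B (I z) (I' z))"
proof -
  have "interp B I S'" using interp_sub[OF assms(2,4,5)] .
  moreover have "\<forall>z \<in> Var S. leq B (I z) (I z)" using refl_var[OF assms(1,2)] .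
  ultimately show ?thesis using assms(3,6) by blast
qed

lemma main_aux:
  "ik4_rule Ps S \<Longrightarrow> finite (rels S) \<Longrightarrow> quasi_tree_like S \<Longrightarrow> BIGL B \<Longrightarrow> interp B I S \<Longrightarrow>
   \<not> sat_seq B I S \<Longrightarrow>
   \<exists>S' \<in> set Ps. \<exists>I'. interp B I' S' \<and> \<not> sat_seq B I' S' \<and> (\<forall>z \<in> Var S. leq B (I z) (I' z))"
proof (induction rule: ik4_rule.induct)
  case (idr R x p)
  then show ?case by simp
next
  case (botL R x G y B)
  then show ?case by simp
next
  case (cut R G x A G' y C)
  let ?S = "Seq R (G + G') y C"
  have b: "BIGL B" and i: "interp B I ?S" and ns: "\<not> sat_seq B I ?S" using cut.prems by auto
  have iv: "\<forall>z\<in>Var ?S. I z \<in> worlds B" and ie: "\<forall>(u,v)\<in>R. acc B (I u) (I v)"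
    using i unfolding interp_def by auto
  have yw: "I y \<in> worlds B" using iv by simp
  define I1 where "I1 = (if x \<in> Var ?S then I else I(x := I y))"
  have I1a: "\<forall>z\<in>Var ?S. I1 z = I z" unfolding I1_def by auto
  have I1b: "I1 x \<in> worlds B" unfolding I1_def using iv yw by auto
  have RV: "u \<in> Var ?S \<and> v \<in> Var ?S" if "(u,v) \<in> R" for u v
    using VarR_I[OF that] by simp
  have ie1: "acc B (I1 u) (I1 v)" if "(u,v) \<in> R" for u v
  proof -
    have "acc B (I u) (I v)" using ie that by blast
    moreover have "I1 u = I u" "I1 v = I v" using I1a RV[OF that] by blast+
    ultimately show ?thesis by simp
  qed
  have iv1: "\<forall>z\<in>Var ?S. I1 z \<in> worlds B" using iv I1a by simp
  have int1: "interp B I1 (Seq R G x A)" "interp B I1 (Seq R (add_mset (x, A) G') y C)"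
    unfolding interp_def using iv1 I1b ie1 by auto
  have fG0: "\<forall>(u,D)\<in>set_mset (G+G'). forces B (I u) D" using ns by simp
  have fG: "forces B (I1 u) D" if "(u,D) \<in># G+G'" for u D
  proof -
    have "u \<in> Var ?S" using VarG_I[OF that] by simp
    then have "I1 u = I u" using I1a by blast
    moreover have "forces B (I u) D" using fG0 that by blast
    ultimately show ?thesis by simp
  qed
  have nC: "\<not> forces B (I1 y) C" using ns I1a by simp
  have ge: "\<forall>z\<in>Var ?S. leq B (I z) (I1 z)" using refl_var[OF b i] I1a by simp
  show ?case
  proof (cases "forces B (I1 x) A")
    case True
    have "\<not> sat_seq B I1 (Seq R (add_mset (x, A) G') y C)" using True fG nC by auto
    then show ?thesis using int1(2) ge by (intro bexI[of _ "Seq R (add_mset (x, A) G') y C"]) auto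
  next
    case False
    have "\<not> sat_seq B I1 (Seq R G x A)" using False fG by auto
    then show ?thesis using int1(1) ge by (intro bexI[of _ "Seq R G x A"]) auto
  qed
next
  case (weakL R G y C x A)
  then show ?case by (intro same_I[of B I _ "Seq R G y C"]) auto
next
  case (contrL R x A G y C)
  then show ?case by (intro same_I[of B I _ "Seq R (add_mset (x, A) (add_mset (x, A) G)) y C"]) auto
next
  case (impL R G x A A2 G' y C)
  let ?S = "Seq R (add_mset (x, Imp A A2) (G + G')) y C"
  have b: "BIGL B" and i: "interp B I ?S" and ns: "\<not> sat_seq B I ?S" using impL.prems by auto
  have bm: "birel_model B" using BIGL_D(1)[OF b] .
  have xw: "I x \<in> worlds B" using i unfolding interp_def by simp
  have fI: "forces B (I x) (Imp A A2)" using ns by simp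
  show ?case
  proof (cases "forces B (I x) A")
    case True
    then have "forces B (I x) A2" using fI bm_refl[OF bm xw] by simp
    then show ?thesis using impL.prems ns
      by (intro same_I[of B I _ "Seq R (add_mset (x, A2) G') y C"]) auto
  next
    case False
    then show ?thesis using impL.prems ns
      by (intro same_I[of B I _ "Seq R G x A"]) auto
  qed
next
  case (impR R x A G A2)
  let ?S = "Seq R G x (Imp A A2)"
  have b: "BIGL B" and i: "interp B I ?S" and ns: "\<not> sat_seq B I ?S" using impR.prems by auto
  have bm: "birel_model B" using BIGL_D(1)[OF b] .
  obtain w' where w': "leq B (I x) w'" "forces B w' A" "\<not> forces B w' A2" using ns by auto
  obtain I' where I': "\<forall>z\<in>Var ?S. leq B (I z) (I' z)" "I' x = w'" "\<forall>(u,v)\<in>R. acc B (I' u) (I' v)"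
    using lift_seq[OF _ _ b i w'(1)] impR.prems by auto
  have int: "interp B I' (Seq R (add_mset (x, A) G) x A2)"
    using I' bm_leqw[OF bm] unfolding interp_def by fastforce
  have fG: "\<forall>(u,D)\<in>set_mset G. forces B (I' u) D"
  proof clarify
    fix u D assume uD: "(u,D) \<in># G"
    then have "forces B (I u) D" using ns by auto
    moreover have "u \<in> Var ?S" using VarG_I[OF uD] by simp
    ultimately show "forces B (I' u) D" using forces_mono[OF bm] I'(1) by blast
  qed
  show ?case using int fG w' I' by (intro bexI[of _ "Seq R (add_mset (x, A) G) x A2"]) auto
next
  case (andL1 R x A G y C A2)
  then show ?case by (intro same_I[of B I _ "Seq R (add_mset (x, A) G) y C"]) auto
next
  case (andL2 R x A2 G y C A)
  then show ?case by (intro same_I[of B I _ "Seq R (add_mset (x, A2) G) y C"]) auto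
next
  case (andR R G x A A2)
  show ?case
  proof (cases "forces B (I x) A")
    case True
    then show ?thesis using andR.prems by (intro same_I[of B I _ "Seq R G x A2"]) auto
  next
    case False
    then show ?thesis using andR.prems by (intro same_I[of B I _ "Seq R G x A"]) auto
  qed
next
  case (orL R x A G y C A2)
  show ?case
  proof (cases "forces B (I x) A")
    case True
    then show ?thesis using orL.prems by (intro same_I[of B I _ "Seq R (add_mset (x, A) G) y C"]) auto
  next
    case False
    then show ?thesis using orL.prems by (intro same_I[of B I _ "Seq R (add_mset (x, A2) G) y C"]) auto
  qed
next
  case (orR1 R G x A A2)
  then show ?case by (intro same_I[of B I _ "Seq R G x A"]) auto
next
  case (orR2 R G x A2 A)
  then show ?case by (intro same_I[of B I _ "Seq R G x A2"]) auto
next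
  case (diaL y R x A G z C)
  let ?S = "Seq R (add_mset (x, Dia A) G) z C"
  have b: "BIGL B" and i: "interp B I ?S" and ns: "\<not> sat_seq B I ?S" using diaL.prems by auto
  have bm: "birel_model B" using BIGL_D(1)[OF b] .
  obtain v where v: "acc B (I x) v" "forces B v A" using ns by auto
  let ?I = "I(y := v)"
  have yn: "y \<notin> Var ?S" by fact
  have same: "\<forall>u\<in>Var ?S. ?I u = I u" using yn by auto
  have vw: "v \<in> worlds B" using bm_accw[OF bm v(1)] by blast
  have ie: "\<forall>(u,w)\<in>R. acc B (I u) (I w)" using i unfolding interp_def by auto
  have RV: "(u,w) \<in> R \<Longrightarrow> u \<in> Var ?S \<and> w \<in> Var ?S" for u w using VarR_I by fastforce
  let ?P = "Seq (insert (x, y) R) (add_mset (y, A) G) z C"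
  have xS: "x \<in> Var ?S" by simp
  have xy: "x \<noteq> y" using xS yn by blast
  have iv: "\<forall>u\<in>Var ?S. I u \<in> worlds B" using i unfolding interp_def by blast
  have wv: "\<forall>u\<in>Var ?P. ?I u \<in> worlds B"
  proof
    fix u assume u: "u \<in> Var ?P"
    show "?I u \<in> worlds B"
    proof (cases "u = y")
      case True then show ?thesis using vw by simp
    next
      case False
      then have "u \<in> Var ?S" using u xS by auto
      then have "I u \<in> worlds B" using iv by blast
      then show ?thesis using False by simp
    qed
  qed
  have ed: "acc B (?I a) (?I c)" if ac: "(a,c) \<in> insert (x,y) R" for a c
  proof (cases "(a,c) = (x,y)")
    case True then show ?thesis using v(1) xy by auto
  next
    case False
    then have ac': "(a,c) \<in> R" using ac by blast
    then have "a \<in> Var ?S" "c \<in> Var ?S" using RV by blast+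
    moreover have "acc B (I a) (I c)" using ie ac' by blast
    moreover have "a \<noteq> y" "c \<noteq> y" using calculation(1,2) yn by blast+
    ultimately show ?thesis by simp
  qed
  have ed': "\<forall>(a,c)\<in>insert (x,y) R. acc B (?I a) (?I c)" using ed by blast
  have int: "interp B ?I ?P" unfolding interp_def rels.simps by (intro conjI) (fact wv, fact ed')
  have fG: "\<forall>(u,D)\<in>set_mset G. forces B (?I u) D"
  proof clarify
    fix u D assume uD: "(u,D) \<in># G"
    then have "forces B (I u) D" using ns by auto
    moreover have uS: "u \<in> Var ?S" using VarG_I[OF uD] by simp
    moreover have "?I u = I u" using same uS by blast
    ultimately show "forces B (?I u) D" by simp
  qed
  have "?I z = I z" using same by simp
  then have nC: "\<not> forces B (?I z) C" using ns by simp
  have ge: "\<forall>u\<in>Var ?S. leq B (I u) (?I u)"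
  proof
    fix u assume u: "u \<in> Var ?S"
    then have "?I u = I u" using same by blast
    moreover have "leq B (I u) (I u)" using refl_var[OF b i] u by blast
    ultimately show "leq B (I u) (?I u)" by simp
  qed
  have ns': "\<not> sat_seq B ?I ?P" using fG nC v(2) by auto
  have "\<exists>I'. interp B I' ?P \<and> \<not> sat_seq B I' ?P \<and> (\<forall>u\<in>Var ?S. leq B (I u) (I' u))"
    using int ns' ge by blast
  then show ?case by simp
next
  case (diaR x y R G A)
  have "acc B (I x) (I y)" using diaR.prems(4) diaR.hyps unfolding interp_def by auto
  moreover have "y \<in> VarR R" using VarR_I[OF diaR.hyps] by blast
  ultimately show ?case using diaR.prems
    by (intro same_I[of B I _ "Seq R G y A"]) auto
next
  case (boxR y R G x A)
  let ?S = "Seq R G x (Box A)"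
  have b: "BIGL B" and i: "interp B I ?S" and ns: "\<not> sat_seq B I ?S" using boxR.prems by auto
  have bm: "birel_model B" using BIGL_D(1)[OF b] .
  obtain w' v where w': "leq B (I x) w'" "acc B w' v" "\<not> forces B v A" using ns by auto
  obtain I' where I': "\<forall>z\<in>Var ?S. leq B (I z) (I' z)" "I' x = w'" "\<forall>(u,v)\<in>R. acc B (I' u) (I' v)"
    using lift_seq[OF _ _ b i w'(1)] boxR.prems by auto
  let ?I = "I'(y := v)"
  have yn: "y \<notin> Var ?S" by fact
  have same: "\<forall>u\<in>Var ?S. ?I u = I' u" using yn by auto
  have vw: "v \<in> worlds B" using bm_accw[OF bm w'(2)] by blast
  have RV: "(u,w) \<in> R \<Longrightarrow> u \<in> Var ?S \<and> w \<in> Var ?S" for u w using VarR_I by fastforce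
  have iw: "\<forall>u\<in>Var ?S. I' u \<in> worlds B" using I'(1) bm_leqw[OF bm] by blast
  let ?P = "Seq (insert (x, y) R) G y A"
  have xS: "x \<in> Var ?S" by simp
  have xy: "x \<noteq> y" using xS yn by blast
  have wv: "\<forall>u\<in>Var ?P. ?I u \<in> worlds B"
  proof
    fix u assume u: "u \<in> Var ?P"
    show "?I u \<in> worlds B"
    proof (cases "u = y")
      case True then show ?thesis using vw by simp
    next
      case False
      then have "u \<in> Var ?S" using u xS by auto
      then have "I' u \<in> worlds B" using iw by blast
      then show ?thesis using False by simp
    qed
  qed
  have ed: "acc B (?I a) (?I c)" if ac: "(a,c) \<in> insert (x,y) R" for a c
  proof (cases "(a,c) = (x,y)")
    case True then show ?thesis using w'(2) I'(2) xy by auto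
  next
    case False
    then have ac': "(a,c) \<in> R" using ac by blast
    then have "a \<in> Var ?S" "c \<in> Var ?S" using RV by blast+
    moreover have "acc B (I' a) (I' c)" using I'(3) ac' by blast
    moreover have "a \<noteq> y" "c \<noteq> y" using calculation(1,2) yn by blast+
    ultimately show ?thesis by simp
  qed
  have ed': "\<forall>(a,c)\<in>insert (x,y) R. acc B (?I a) (?I c)" using ed by blast
  have int: "interp B ?I ?P" unfolding interp_def rels.simps by (intro conjI) (fact wv, fact ed')
  have fG: "\<forall>(u,D)\<in>set_mset G. forces B (?I u) D"
  proof clarify
    fix u D assume uD: "(u,D) \<in># G"
    then have "forces B (I u) D" using ns by auto
    moreover have "u \<in> Var ?S" using VarG_I[OF uD] by simp
    ultimately show "forces B (?I u) D" using forces_mono[OF bm] I'(1) same by metis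
  qed
  have ge: "\<forall>u\<in>Var ?S. leq B (I u) (?I u)"
  proof
    fix u assume u: "u \<in> Var ?S"
    then have "?I u = I' u" using same by blast
    moreover have "leq B (I u) (I' u)" using I'(1) u by blast
    ultimately show "leq B (I u) (?I u)" by simp
  qed
  have ns': "\<not> sat_seq B ?I ?P" using fG w'(3) by auto
  have "\<exists>I'. interp B I' ?P \<and> \<not> sat_seq B I' ?P \<and> (\<forall>u\<in>Var ?S. leq B (I u) (I' u))"
    using int ns' ge by blast
  then show ?case by simp
next
  case (boxL x y R A G z C)
  have bm: "birel_model B" using BIGL_D(1) boxL.prems(3) by blast
  have a: "acc B (I x) (I y)" using boxL.prems(4) boxL.hyps unfolding interp_def by auto
  have "leq B (I x) (I x)" using bm_refl[OF bm] bm_accw[OF bm a] by blast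
  then have "forces B (I y) A" using a boxL.prems(5) by auto
  moreover have "y \<in> VarR R" using VarR_I[OF boxL.hyps] by blast
  ultimately show ?case using boxL.prems
    by (intro same_I[of B I _ "Seq R (add_mset (y, A) G) z C"]) auto
next
  case (tr x y R z G w C)
  have "acc B (I x) (I z)" using tr.prems(3,4) tr.hyps BIGL_trans unfolding interp_def by fastforce
  moreover have "x \<in> VarR R" "z \<in> VarR R" using VarR_I tr.hyps by blast+
  ultimately have "interp B I (Seq (insert (x, z) R) G w C)"
    using tr.prems(4) unfolding interp_def by auto
  moreover have "\<not> sat_seq B I (Seq (insert (x, z) R) G w C)" using tr.prems(5) by simp
  ultimately show ?case using refl_var[OF tr.prems(3,4)] by auto
qed

theorem mainTheorem5:
  fixes B :: "('w, 'a) bmodel" and I :: "nat \<Rightarrow> 'w" and S :: "'a seq"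
    and Ps :: "'a seq list"
  assumes "finite (rels S)"
    and "quasi_tree_like S"
    and "BIGL B"
    and "interp B I S"
    and "\<not> sat_seq B I S"
    and "ik4_rule Ps S"
  shows "\<exists>S' \<in> set Ps. \<exists>I'. interp B I' S' \<and> \<not> sat_seq B I' S' \<and>
           (\<forall>z \<in> Var S. leq B (I z) (I' z))"
  using main_aux[OF assms(6,1,2,3,4,5)] .

end
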